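(* A binary relation (i.e. a structure $(X,\rho)$ with $\rho\subseteq X\times X$) is unary FA-presentable if and only if it is isomorphic to a binary relation obtained by propagating a unary FA-foundational binary relation.
   Context: A structure is unary FA-presentable if there exist a regular language $L\subseteq a^*$ over a one-letter alphabet and a surjection $\phi:L\to X$ such that, for each of the relations equality and $\rho$, the set of pairs $(u,v)\in L^2$ with $u\phi,v\phi$ related is a regular relation, i.e. $\{\mathrm{conv}(u,v)\}$ is a regular language, where $\mathrm{conv}(u,v)$ is the word over $\{a,\$\}^2$ reading $u,v$ in parallel with the shorter word padded by $\$$. A unary FA-foundational binary relation is a finite set $Q$ with a relation $\rho\subseteq Q\times Q$ and pairwise disjoint subsets $P_0,\dots,P_{n-1}$ ($n\ge 0$) called seeds, each $P_k=\{p^{(k)}_1,\dots,p^{(k)}_5\}$ with five distinct elements, such that, writing $Q'=Q\setminus(P_0\cup\dots\cup P_{n-1})$, for all $k,l\in\{0,\dots,n-1\}$ (possibly $k=l$) and all $q\in Q'$: (1) the statements $p^{(k)}_i\,\rho\,p^{(l)}_i$ for $i=1,\dots,5$ are all true or all false; (2) the statements $p^{(k)}_i\,\rho\,p^{(l)}_{i+1}$ for $i=1,\dots,4$ are all true or all false; (3) the statements $p^{(k)}_{i+1}\,\rho\,p^{(l)}_{i}$ for $i=1,\dots,4$ are all true or all false; (4) the statements $p^{(k)}_i\,\rho\,p^{(l)}_j$ for all $1\le i,j\le 5$ with $j-i\ge 2$ are all true or all false; (5) the statements $p^{(k)}_j\,\rho\,p^{(l)}_i$ for all $1\le i,j\le5$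 with $j-i\ge 2$ are all true or all false; (6) the statements $q\,\rho\,p^{(k)}_i$ for $i=2,\dots,5$ are all true or all false; (7) the statements $p^{(k)}_i\,\rho\,q$ for $i=2,\dots,5$ are all true or all false. Propagating it yields the structure $(\hat Q,\hat\rho)$ where $\hat Q=Q'\cup\{p^{(k)}_i: 0\le k\le n-1,\ i\in\mathbb{N}=\{1,2,\dots\}\}$ (new distinct elements $p^{(k)}_i$ for $i\ge 6$), and $\hat\rho$ is defined by: for $p,q\in Q'$, $p\,\hat\rho\, q$ iff $p\,\rho\, q$; for $i,j\in\mathbb{N}$, $p^{(k)}_i\,\hat\rho\,p^{(l)}_j$ iff [$j=i$ and $p^{(k)}_1\rho p^{(l)}_1$] or [$j=i+1$ and $p^{(k)}_1\rho p^{(l)}_2$] or [$j=i-1$ and $p^{(k)}_2\rho p^{(l)}_1$] or [$j\ge i+2$ and $p^{(k)}_1\rho p^{(l)}_3$] or [$j\le i-2$ and $p^{(k)}_3\rho p^{(l)}_1$]; for $q\in Q'$: $q\,\hat\rho\,p^{(k)}_1$ iff $q\rho p^{(k)}_1$, and for $i\ge2$, $q\,\hat\rho\,p^{(k)}_i$ iff $q\rho p^{(k)}_2$; $p^{(k)}_1\,\hat\rho\,q$ iff $p^{(k)}_1\rho q$, and for $i\ge 2$, $p^{(k)}_i\,\hat\rho\,q$ iff $p^{(k)}_2\rho q$. (Then $\hat\rho$ restricted to $Q$ equals $\rho$.) *)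

theory Defs
  imports Main
begin

definition regular :: "'c list set \<Rightarrow> bool" where
  "regular L \<longleftrightarrow> (\<exists>(N::nat) (delta :: nat \<Rightarrow> 'c \<Rightarrow> nat) q0 F.
      q0 < N \<and> (\<forall>q<N. \<forall>c. delta q c < N) \<and> F \<subseteq> {..<N} \<and>
      L = {w. foldl delta q0 w \<in> F})"

text \<open>Words over the one-letter alphabet {a}: lists over unit. The padded
  alphabet {a,\$}: symbols A (= a) and Pad (= \$).\<close>

datatype sym = A | Pad

definition conv :: "unit list \<Rightarrow> unit list \<Rightarrow> (sym \<times> sym) list" where
  "conv u v = map (\<lambda>i. (if i < length u then A else Pad, if i < length v then A else Pad))
                  [0..<max (length u) (length v)]"

definition regular_relation :: "(unit list \<Rightarrow> unit list \<Rightarrow> bool) \<Rightarrow> bool" where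
  "regular_relation R \<longleftrightarrow> regular {conv u v | u v. R u v}"

definition unary_FA_presentable :: "'a set \<Rightarrow> ('a \<Rightarrow> 'a \<Rightarrow> bool) \<Rightarrow> bool" where
  "unary_FA_presentable X rho \<longleftrightarrow> (\<exists>(L :: unit list set) (phi :: unit list \<Rightarrow> 'a).
      regular L \<and> phi ` L = X \<and>
      regular_relation (\<lambda>u v. u \<in> L \<and> v \<in> L \<and> phi u = phi v) \<and>
      regular_relation (\<lambda>u v. u \<in> L \<and> v \<in> L \<and> rho (phi u) (phi v)))"

definition uniform :: "'i set \<Rightarrow> ('i \<Rightarrow> bool) \<Rightarrow> bool" where
  "uniform I P \<longleftrightarrow> (\<forall>i\<in>I. P i) \<or> (\<forall>i\<in>I. \<not> P i)"

definition seed_elems :: "nat \<Rightarrow> (nat \<Rightarrow> nat \<Rightarrow> 'b) \<Rightarrow> 'b set" where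
  "seed_elems n p = {p k i | k i. k < n \<and> i \<in> {1..5}}"

definition FA_foundational ::
  "'b set \<Rightarrow> ('b \<Rightarrow> 'b \<Rightarrow> bool) \<Rightarrow> nat \<Rightarrow> (nat \<Rightarrow> nat \<Rightarrow> 'b) \<Rightarrow> bool" where
  "FA_foundational Q rho n p \<longleftrightarrow>
     finite Q \<and> (\<forall>x y. rho x y \<longrightarrow> x \<in> Q \<and> y \<in> Q) \<and>
     seed_elems n p \<subseteq> Q \<and>
     inj_on (\<lambda>(k, i). p k i) ({..<n} \<times> {1..5}) \<and>
     (\<forall>k<n. \<forall>l<n.
        uniform {1..5} (\<lambda>i. rho (p k i) (p l i)) \<and>
        uniform {1..4} (\<lambda>i. rho (p k i) (p l (i+1))) \<and>
        uniform {1..4} (\<lambda>i. rho (p k (i+1)) (p l i)) \<and>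
        uniform {(i, j). 1 \<le> i \<and> j \<le> 5 \<and> i + 2 \<le> j} (\<lambda>(i, j). rho (p k i) (p l j)) \<and>
        uniform {(i, j). 1 \<le> i \<and> j \<le> 5 \<and> i + 2 \<le> j} (\<lambda>(i, j). rho (p k j) (p l i))) \<and>
     (\<forall>k<n. \<forall>q \<in> Q - seed_elems n p.
        uniform {2..5} (\<lambda>i. rho q (p k i)) \<and>
        uniform {2..5} (\<lambda>i. rho (p k i) q))"

text \<open>The propagated structure. Elements of Q' are represented as Inl q, and
  the element p^(k)_i (k < n, i \<ge> 1) as Inr (k, i).\<close>

definition prop_carrier :: "'b set \<Rightarrow> nat \<Rightarrow> (nat \<Rightarrow> nat \<Rightarrow> 'b) \<Rightarrow> ('b + nat \<times> nat) set" where
  "prop_carrier Q n p = Inl ` (Q - seed_elems n p) \<union> {Inr (k, i) | k i. k < n \<and> 1 \<le> i}"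

fun prop_rel :: "('b \<Rightarrow> 'b \<Rightarrow> bool) \<Rightarrow> (nat \<Rightarrow> nat \<Rightarrow> 'b) \<Rightarrow>
    ('b + nat \<times> nat) \<Rightarrow> ('b + nat \<times> nat) \<Rightarrow> bool" where
  "prop_rel rho p (Inl q) (Inl r) = rho q r"
| "prop_rel rho p (Inr (k, i)) (Inr (l, j)) =
     ((j = i \<and> rho (p k 1) (p l 1)) \<or>
      (j = i + 1 \<and> rho (p k 1) (p l 2)) \<or>
      (j + 1 = i \<and> rho (p k 2) (p l 1)) \<or>
      (j \<ge> i + 2 \<and> rho (p k 1) (p l 3)) \<or>
      (i \<ge> j + 2 \<and> rho (p k 3) (p l 1)))"
| "prop_rel rho p (Inl q) (Inr (k, i)) =
     (if i = 1 then rho q (p k 1) else rho q (p k 2))"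
| "prop_rel rho p (Inr (k, i)) (Inl q) =
     (if i = 1 then rho (p k 1) q else rho (p k 2) q)"

definition rel_isomorphic ::
  "'a set \<Rightarrow> ('a \<Rightarrow> 'a \<Rightarrow> bool) \<Rightarrow> 'c set \<Rightarrow> ('c \<Rightarrow> 'c \<Rightarrow> bool) \<Rightarrow> bool" where
  "rel_isomorphic X rho Y sigma \<longleftrightarrow>
     (\<exists>f. bij_betw f X Y \<and> (\<forall>x\<in>X. \<forall>y\<in>X. rho x y \<longleftrightarrow> sigma (f x) (f y)))"

end

theory Submission
  imports Defs
begin

lemma regular_of_dfa:
  fixes \<delta> :: "'s \<Rightarrow> 'c \<Rightarrow> 's"
  assumes fin: "finite Qs" and q0: "q0 \<in> Qs" and cl: "\<forall>q\<in>Qs. \<forall>c. \<delta> q c \<in> Qs"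
    and L: "L = {w. foldl \<delta> q0 w \<in> F}"
  shows "regular L"
proof -
  obtain h where h: "bij_betw h Qs {0..<card Qs}" using ex_bij_betw_finite_nat[OF fin] by blast
  define N where "N = card Qs"
  define hi where "hi = the_inv_into Qs h"
  have hinj: "inj_on h Qs" using h by (simp add: bij_betw_def)
  have hi: "\<And>q. q \<in> Qs \<Longrightarrow> hi (h q) = q" unfolding hi_def using hinj by (simp add: the_inv_into_f_f)
  have hN: "\<And>q. q \<in> Qs \<Longrightarrow> h q < N" using h unfolding N_def bij_betw_def by auto
  define \<delta>' where "\<delta>' = (\<lambda>n c. if n < N then h (\<delta> (hi n) c) else 0)"
  have inQ: "\<And>w q. q \<in> Qs \<Longrightarrow> foldl \<delta> q w \<in> Qs"
  proof -
    fix w show "\<And>q. q \<in> Qs \<Longrightarrow> foldl \<delta> q w \<in> Qs" using cl by (induct w) auto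
  qed
  have run: "\<And>w q. q \<in> Qs \<Longrightarrow> foldl \<delta>' (h q) w = h (foldl \<delta> q w)"
  proof -
    fix w show "\<And>q. q \<in> Qs \<Longrightarrow> foldl \<delta>' (h q) w = h (foldl \<delta> q w)"
    proof (induct w)
      case Nil then show ?case by simp
    next
      case (Cons c w)
      have "\<delta>' (h q) c = h (\<delta> q c)" using Cons.prems hN hi unfolding \<delta>'_def by simp
      then show ?case using Cons cl by simp
    qed
  qed
  define F' where "F' = h ` (F \<inter> Qs)"
  have "L = {w. foldl \<delta>' (h q0) w \<in> F'}"
  proof -
    have "\<And>w. foldl \<delta> q0 w \<in> F \<longleftrightarrow> foldl \<delta>' (h q0) w \<in> F'"
      unfolding F'_def using run[OF q0] inQ[OF q0] hinj
      by (auto simp: inj_on_image_mem_iff)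
    then show ?thesis using L by auto
  qed
  moreover have "h q0 < N" using hN q0 by simp
  moreover have "\<forall>q<N. \<forall>c. \<delta>' q c < N" unfolding \<delta>'_def
  proof (intro allI impI)
    fix q c assume "q < N"
    then have "hi q \<in> Qs" unfolding hi_def N_def using h
      by (metis atLeastLessThan_iff bij_betw_def bij_betw_the_inv_into le0 the_inv_into_into subset_refl bij_betw_imp_surj_on)
    then show "(if q < N then h (\<delta> (hi q) c) else 0) < N" using cl hN \<open>q<N\<close> by auto
  qed
  moreover have "F' \<subseteq> {..<N}" unfolding F'_def using hN by auto
  ultimately show ?thesis unfolding regular_def by blast
qed

lemma funpow_stay: "\<forall>q<N. f q < N \<Longrightarrow> q < N \<Longrightarrow> (f ^^ m) q < N"
  by (induct m) auto

lemma funpow_period: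
  assumes cl: "\<forall>q<N. f q < N" and q: "q < N" and m: "N \<le> m"
  shows "(f ^^ (m + fact N)) q = (f ^^ m) q"
proof -
  have "\<not> inj_on (\<lambda>i. (f ^^ i) q) {0..N}"
  proof
    assume "inj_on (\<lambda>i. (f ^^ i) q) {0..N}"
    moreover have "(\<lambda>i. (f ^^ i) q) ` {0..N} \<subseteq> {..<N}" using funpow_stay[OF cl q] by auto
    ultimately have "card {0..N} \<le> card {..<N}" by (rule card_inj_on_le) simp
    then show False by simp
  qed
  then obtain i j where ij: "i \<in> {0..N}" "j \<in> {0..N}" "i \<noteq> j" "(f ^^ i) q = (f ^^ j) q"
    unfolding inj_on_def by blast
  then obtain i j where ij: "i < j" "j \<le> N" "(f ^^ i) q = (f ^^ j) q"
    by (metis atLeastAtMost_iff linorder_neqE_nat)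
  define d where "d = j - i"
  have step: "\<And>m. i \<le> m \<Longrightarrow> (f ^^ (m + d)) q = (f ^^ m) q"
  proof -
    fix m assume "i \<le> m"
    have "m + d = (m - i) + j" using \<open>i \<le> m\<close> ij unfolding d_def by simp
    then have "(f ^^ (m + d)) q = (f ^^ (m - i)) ((f ^^ j) q)" by (simp add: funpow_add)
    also have "\<dots> = (f ^^ (m - i)) ((f ^^ i) q)" using ij by simp
    also have "\<dots> = (f ^^ m) q" proof -
      have "(f ^^ m) q = (f ^^ ((m - i) + i)) q" using \<open>i \<le> m\<close> by simp
      then show ?thesis by (simp add: funpow_add)
    qed
    finally show "(f ^^ (m + d)) q = (f ^^ m) q" .
  qed
  have iter: "\<And>t m. i \<le> m \<Longrightarrow> (f ^^ (m + t * d)) q = (f ^^ m) q"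
  proof -
    fix t show "\<And>m. i \<le> m \<Longrightarrow> (f ^^ (m + t * d)) q = (f ^^ m) q"
    proof (induct t)
      case 0 then show ?case by simp
    next
      case (Suc t)
      have "m + Suc t * d = (m + t * d) + d" by simp
      then show ?case using step[of "m + t*d"] Suc by (metis le_add1 order_trans)
    qed
  qed
  have "d dvd fact N" using ij unfolding d_def by (intro dvd_fact) auto
  then obtain t where "fact N = t * d" by (metis dvd_def mult.commute)
  then show ?thesis using iter[of m t] m ij by simp
qed


definition cw :: "nat \<Rightarrow> nat \<Rightarrow> (sym \<times> sym) list" where
  "cw a b = conv (replicate a ()) (replicate b ())"

lemma cw_length[simp]: "length (cw a b) = max a b"
  by (simp add: cw_def conv_def)

lemma cw_nth: "i < max a b \<Longrightarrow> cw a b ! i = (if i < a then A else Pad, if i < b then A else Pad)"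
  by (simp add: cw_def conv_def)

lemma cw_le: "cw a (a + e) = replicate a (A,A) @ replicate e (Pad,A)"
  by (rule nth_equalityI) (auto simp: cw_nth nth_append)

lemma cw_ge: "cw (a + e) a = replicate a (A,A) @ replicate e (A,Pad)"
  by (rule nth_equalityI) (auto simp: cw_nth nth_append)

lemma cw_inj: assumes "cw a b = cw a' b'" shows "a = a' \<and> b = b'"
proof -
  have m: "max a b = max a' b'" using arg_cong[OF assms, of length] by simp
  have "a = a'"
  proof (rule ccontr)
    assume "a \<noteq> a'"
    then consider "a < a'" | "a' < a" by linarith
    then show False
    proof cases
      case 1
      then have "a < max a b" using m by linarith
      then show False using arg_cong[OF assms, of "\<lambda>w. fst (w ! a)"] 1 m by (simp add: cw_nth)
    next
      case 2
      then have "a' < max a b" using m by linarith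
      then show False using arg_cong[OF assms, of "\<lambda>w. fst (w ! a')"] 2 m by (simp add: cw_nth)
    qed
  qed
  moreover have "b = b'"
  proof (rule ccontr)
    assume "b \<noteq> b'"
    then consider "b < b'" | "b' < b" by linarith
    then show False
    proof cases
      case 1
      then have "b < max a b" using m by linarith
      then show False using arg_cong[OF assms, of "\<lambda>w. snd (w ! b)"] 1 m by (simp add: cw_nth)
    next
      case 2
      then have "b' < max a b" using m by linarith
      then show False using arg_cong[OF assms, of "\<lambda>w. snd (w ! b')"] 2 m by (simp add: cw_nth)
    qed
  qed
  ultimately show ?thesis ..
qed

lemma mem_cw: "cw a b \<in> {cw a b | a b. S a b} \<longleftrightarrow> S a b"
  using cw_inj by blast

lemma unit_list: "(u :: unit list) = replicate (length u) ()"
  by (induct u) auto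

lemma conv_set_cw: "{conv u v | u v. R u v} = {cw a b | a b. R (replicate a ()) (replicate b ())}"
  unfolding cw_def by (auto, metis unit_list)

lemma foldl_replicate: "foldl f q (replicate m c) = ((\<lambda>q. f q c) ^^ m) q"
proof (induct m arbitrary: q)
  case 0 then show ?case by simp
next
  case (Suc m)
  have "foldl f q (replicate (Suc m) c) = foldl f (f q c) (replicate m c)" by simp
  also have "\<dots> = ((\<lambda>q. f q c) ^^ m) ((\<lambda>q. f q c) q)" using Suc by simp
  also have "\<dots> = ((\<lambda>q. f q c) ^^ Suc m) q" by (simp only: funpow_Suc_right comp_def)
  finally show ?case .
qed

definition EP :: "(nat \<Rightarrow> nat \<Rightarrow> bool) \<Rightarrow> nat \<Rightarrow> nat \<Rightarrow> bool" where
  "EP S T P \<longleftrightarrow> 0 < P \<and>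
    (\<forall>a b. T \<le> a \<longrightarrow> T \<le> b \<longrightarrow> S (a + P) (b + P) = S a b) \<and>
    (\<forall>a b. a + T \<le> b \<longrightarrow> S a (b + P) = S a b) \<and>
    (\<forall>a b. b + T \<le> a \<longrightarrow> S (a + P) b = S a b)"

lemma EP_swap: "EP S T P \<Longrightarrow> EP (\<lambda>a b. S b a) T P"
  unfolding EP_def by auto

lemma ep1k: "EP S T P \<Longrightarrow> T \<le> a \<Longrightarrow> T \<le> b \<Longrightarrow> S (a + k * P) (b + k * P) = S a b"
proof (induct k)
  case 0 then show ?case by simp
next
  case (Suc k)
  have "S (a + Suc k * P) (b + Suc k * P) = S ((a + k*P) + P) ((b + k*P) + P)" by (simp add: algebra_simps)
  also have "\<dots> = S (a + k*P) (b + k*P)" using Suc.prems unfolding EP_def by (simp add: trans_le_add1)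
  finally show ?case using Suc by simp
qed

lemma ep2k: "EP S T P \<Longrightarrow> a + T \<le> b \<Longrightarrow> S a (b + k * P) = S a b"
proof (induct k)
  case 0 then show ?case by simp
next
  case (Suc k)
  have "S a (b + Suc k * P) = S a ((b + k*P) + P)" by (simp add: algebra_simps)
  also have "\<dots> = S a (b + k*P)" using Suc.prems unfolding EP_def by (simp add: trans_le_add1)
  finally show ?case using Suc by simp
qed

lemma ep3k: assumes "EP S T P" "b + T \<le> a" shows "S (a + k * P) b = S a b"
proof -
  have e: "EP (\<lambda>a b. S b a) T P" using EP_swap[OF assms(1)] .
  show ?thesis using ep2k[OF e assms(2), of k] by simp
qed

lemma EP_mono: assumes "EP S T P" "T \<le> T'" "0 < k" shows "EP S T' (k * P)"
proof -
  have "0 < P" using assms(1) unfolding EP_def by simp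
  have 1: "\<forall>a b. T' \<le> a \<longrightarrow> T' \<le> b \<longrightarrow> S (a + k*P) (b + k*P) = S a b"
    using ep1k[OF assms(1)] assms(2) by auto
  have 2: "\<forall>a b. a + T' \<le> b \<longrightarrow> S a (b + k*P) = S a b"
    using ep2k[OF assms(1)] assms(2) by auto
  have 3: "\<forall>a b. b + T' \<le> a \<longrightarrow> S (a + k*P) b = S a b"
    using ep3k[OF assms(1)] assms(2) by auto
  show ?thesis unfolding EP_def using 1 2 3 \<open>0 < P\<close> assms(3) by simp
qed


lemma regular_EP:
  assumes "regular {cw a b | a b. S a b}"
  shows "\<exists>T P. EP S T P"
proof -
  obtain N \<delta> q0 F where q0: "(q0::nat) < N" and cl: "\<forall>q<N. \<forall>c. \<delta> q c < N"
    and Lq: "{cw a b | a b. S a b} = {w. foldl \<delta> q0 w \<in> F}"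
    using assms unfolding regular_def by (elim exE conjE) blast
  define g where "g = (\<lambda>c q. \<delta> q c)"
  have gcl: "\<And>c. \<forall>q<N. g c q < N" using cl unfolding g_def by (metis surj_pair)
  have acc: "\<And>a b. S a b \<longleftrightarrow> foldl \<delta> q0 (cw a b) \<in> F"
    using Lq mem_cw[of _ _ S] by (metis (no_types, lifting) mem_Collect_eq)
  have acc_le: "\<And>a b. a \<le> b \<Longrightarrow> S a b \<longleftrightarrow> (g (Pad,A) ^^ (b - a)) ((g (A,A) ^^ a) q0) \<in> F"
  proof -
    fix a b :: nat assume "a \<le> b"
    then have "cw a b = replicate a (A,A) @ replicate (b-a) (Pad,A)" using cw_le[of a "b-a"] by simp
    then show "S a b \<longleftrightarrow> (g (Pad,A) ^^ (b - a)) ((g (A,A) ^^ a) q0) \<in> F"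
      using acc[of a b] by (simp add: foldl_replicate g_def)
  qed
  have acc_ge: "\<And>a b. b \<le> a \<Longrightarrow> S a b \<longleftrightarrow> (g (A,Pad) ^^ (a - b)) ((g (A,A) ^^ b) q0) \<in> F"
  proof -
    fix a b :: nat assume "b \<le> a"
    then have "cw a b = replicate b (A,A) @ replicate (a-b) (A,Pad)" using cw_ge[of b "a-b"] by simp
    then show "S a b \<longleftrightarrow> (g (A,Pad) ^^ (a - b)) ((g (A,A) ^^ b) q0) \<in> F"
      using acc[of a b] by (simp add: foldl_replicate g_def)
  qed
  have per: "\<And>c q m. q < N \<Longrightarrow> N \<le> m \<Longrightarrow> (g c ^^ (m + fact N)) q = (g c ^^ m) q"
    by (rule funpow_period[OF gcl])
  have stay: "\<And>c q m. q < N \<Longrightarrow> (g c ^^ m) q < N" by (rule funpow_stay[OF gcl])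
  define P :: nat where "P = fact N"
  have "EP S N P" unfolding EP_def
  proof (intro conjI allI impI)
    show "0 < P" unfolding P_def by simp
  next
    fix a b :: nat assume ab: "N \<le> a" "N \<le> b"
    show "S (a + P) (b + P) = S a b"
    proof (cases "a \<le> b")
      case True
      have p: "(g (A,A) ^^ (a + fact N)) q0 = (g (A,A) ^^ a) q0" using per[OF q0 ab(1)] .
      show ?thesis using acc_le[of a b] acc_le[of "a+P" "b+P"] p True unfolding P_def by simp
    next
      case False
      have p: "(g (A,A) ^^ (b + fact N)) q0 = (g (A,A) ^^ b) q0" using per[OF q0 ab(2)] .
      have ba: "b \<le> a" using False by simp
      show ?thesis using acc_ge[OF ba] acc_ge[of "b+P" "a+P"] p ba unfolding P_def by simp
    qed
  next
    fix a b :: nat assume ab: "a + N \<le> b"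
    have e: "b + P - a = (b - a) + fact N" using ab unfolding P_def by simp
    have s: "(g (A,A) ^^ a) q0 < N" using stay[OF q0] .
    have p: "(g (Pad,A) ^^ ((b - a) + fact N)) ((g (A,A) ^^ a) q0) = (g (Pad,A) ^^ (b - a)) ((g (A,A) ^^ a) q0)"
      using per[OF s, of "b - a"] ab by (simp only: le_diff_conv2[of a b N] add.commute)
    have "S a (b + P) \<longleftrightarrow> (g (Pad,A) ^^ (b + P - a)) ((g (A,A) ^^ a) q0) \<in> F"
      using acc_le[of a "b+P"] ab by simp
    also have "\<dots> \<longleftrightarrow> (g (Pad,A) ^^ (b - a)) ((g (A,A) ^^ a) q0) \<in> F" using p e by simp
    also have "\<dots> \<longleftrightarrow> S a b" using acc_le[of a b] ab by simp
    finally show "S a (b + P) = S a b" by simp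
  next
    fix a b :: nat assume ab: "b + N \<le> a"
    have e: "a + P - b = (a - b) + fact N" using ab unfolding P_def by simp
    have s: "(g (A,A) ^^ b) q0 < N" using stay[OF q0] .
    have p: "(g (A,Pad) ^^ ((a - b) + fact N)) ((g (A,A) ^^ b) q0) = (g (A,Pad) ^^ (a - b)) ((g (A,A) ^^ b) q0)"
      using per[OF s, of "a - b"] ab by (simp only: le_diff_conv2[of b a N] add.commute)
    have "S (a + P) b \<longleftrightarrow> (g (A,Pad) ^^ (a + P - b)) ((g (A,A) ^^ b) q0) \<in> F"
      using acc_ge[of b "a+P"] ab by simp
    also have "\<dots> \<longleftrightarrow> (g (A,Pad) ^^ (a - b)) ((g (A,A) ^^ b) q0) \<in> F" using p e by simp
    also have "\<dots> \<longleftrightarrow> S a b" using acc_ge[of b a] ab by simp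
    finally show "S (a + P) b = S a b" by simp
  qed
  then show ?thesis by blast
qed


definition red :: "nat \<Rightarrow> nat \<Rightarrow> nat \<Rightarrow> nat" where
  "red T P x = (if x < T then x else T + (x - T) mod P)"

lemma red_lt: "0 < P \<Longrightarrow> red T P x < T + P"
  unfolding red_def by auto

lemma red_0[simp]: "red T P 0 = 0"
  unfolding red_def by auto

lemma red_Suc: "red T P (Suc (red T P x)) = red T P (Suc x)"
  unfolding red_def by (auto simp: mod_Suc_eq Suc_diff_le)

lemma red_decomp: "T \<le> x \<Longrightarrow> x = red T P x + ((x - T) div P) * P"
  unfolding red_def by simp

lemma red_ge: "T \<le> x \<Longrightarrow> T \<le> red T P x"
  unfolding red_def by simp

lemma EP_red1: assumes "EP S T P" shows "S (red T P a) (red T P a + e) = S a (a + e)"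
proof (cases "a < T")
  case True then show ?thesis by (simp add: red_def)
next
  case False
  then have "T \<le> a" by simp
  have "S (red T P a + ((a - T) div P) * P) (red T P a + e + ((a - T) div P) * P) = S (red T P a) (red T P a + e)"
    using red_ge[OF \<open>T \<le> a\<close>, of P] by (intro ep1k[OF assms]) auto
  moreover have "red T P a + e + ((a - T) div P) * P = a + e"
    using red_decomp[OF \<open>T \<le> a\<close>, of P] by simp
  ultimately show ?thesis using red_decomp[OF \<open>T \<le> a\<close>, of P] by simp
qed

lemma EP_red2: assumes "EP S T P" shows "S x (x + red T P e) = S x (x + e)"
proof (cases "e < T")
  case True then show ?thesis by (simp add: red_def)
next
  case False
  then have "T \<le> e" by simp
  have "S x (x + red T P e + ((e - T) div P) * P) = S x (x + red T P e)"
    using red_ge[OF \<open>T \<le> e\<close>, of P] by (intro ep2k[OF assms]) auto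
  moreover have "x + red T P e + ((e - T) div P) * P = x + e"
    using red_decomp[OF \<open>T \<le> e\<close>, of P] by simp
  ultimately show ?thesis by simp
qed

lemma EP_red: assumes "EP S T P" shows "S (red T P a) (red T P a + red T P e) = S a (a + e)"
  using EP_red1[OF assms] EP_red2[OF assms] by simp

lemma EP_regular:
  assumes ep: "EP S T P"
  shows "regular {cw a b | a b. S a b}"
proof -
  have P0: "0 < P" using ep unfolding EP_def by simp
  have ep': "EP (\<lambda>a b. S b a) T P" using EP_swap[OF ep] .
  define r where "r = red T P"
  define K where "K = T + P"
  define dead :: "nat \<times> nat \<times> nat" where "dead = (3, 0, 0)"
  define \<delta> :: "nat \<times> nat \<times> nat \<Rightarrow> sym \<times> sym \<Rightarrow> nat \<times> nat \<times> nat" where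
    "\<delta> = (\<lambda>(dir, m, d) c.
       if c = (A,A) then (if dir = 0 then (0, r (Suc m), 0) else dead)
       else if c = (Pad,A) then (if dir = 0 \<or> dir = 1 then (1, m, r (Suc d)) else dead)
       else if c = (A,Pad) then (if dir = 0 \<or> dir = 2 then (2, m, r (Suc d)) else dead)
       else dead)"
  define F :: "(nat \<times> nat \<times> nat) set" where
    "F = {(dir, m, d). (dir = 0 \<and> S m m) \<or> (dir = 1 \<and> S m (m + d)) \<or> (dir = 2 \<and> S (m + d) m)}"
  define Qs :: "(nat \<times> nat \<times> nat) set" where "Qs = {..3} \<times> {..<K} \<times> {..<K}"
  have rK: "\<And>x. r x < K" unfolding r_def K_def using red_lt[OF P0] by simp
  have rS: "\<And>x. r (Suc (r x)) = r (Suc x)" unfolding r_def by (rule red_Suc)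
  have r0: "r 0 = 0" unfolding r_def by simp
  have K0: "0 < K" unfolding K_def using P0 by simp
  have cl: "\<forall>q\<in>Qs. \<forall>c. \<delta> q c \<in> Qs"
    unfolding Qs_def \<delta>_def dead_def using rK K0 by auto
  have dead_st: "\<And>c. \<delta> dead c = dead" unfolding \<delta>_def dead_def by auto
  have run0: "\<And>a. foldl \<delta> (0,0,0) (replicate a (A,A)) = (0, r a, 0)"
  proof -
    fix a show "foldl \<delta> (0,0,0) (replicate a (A,A)) = (0, r a, 0)"
    proof (induct a)
      case 0 then show ?case using r0 by simp
    next
      case (Suc a)
      have "foldl \<delta> (0,0,0) (replicate (Suc a) (A,A)) = \<delta> (foldl \<delta> (0,0,0) (replicate a (A,A))) (A,A)"
        by (metis foldl_Cons foldl_Nil foldl_append replicate_Suc replicate_append_same)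
      then show ?case using Suc rS unfolding \<delta>_def by simp
    qed
  qed
  have run1: "\<And>e m. foldl \<delta> (0,m,0) (replicate e (Pad,A)) = (if e = 0 then (0,m,0) else (1, m, r e))"
  proof -
    fix e m show "foldl \<delta> (0,m,0) (replicate e (Pad,A)) = (if e = 0 then (0,m,0) else (1, m, r e))"
    proof (induct e)
      case 0 then show ?case by simp
    next
      case (Suc e)
      have "foldl \<delta> (0,m,0) (replicate (Suc e) (Pad,A)) = \<delta> (foldl \<delta> (0,m,0) (replicate e (Pad,A))) (Pad,A)"
        by (metis foldl_Cons foldl_Nil foldl_append replicate_Suc replicate_append_same)
      then show ?case using Suc rS r0 unfolding \<delta>_def by (cases "e = 0") auto
    qed
  qed
  have run2: "\<And>e m. foldl \<delta> (0,m,0) (replicate e (A,Pad)) = (if e = 0 then (0,m,0) else (2, m, r e))"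
  proof -
    fix e m show "foldl \<delta> (0,m,0) (replicate e (A,Pad)) = (if e = 0 then (0,m,0) else (2, m, r e))"
    proof (induct e)
      case 0 then show ?case by simp
    next
      case (Suc e)
      have "foldl \<delta> (0,m,0) (replicate (Suc e) (A,Pad)) = \<delta> (foldl \<delta> (0,m,0) (replicate e (A,Pad))) (A,Pad)"
        by (metis foldl_Cons foldl_Nil foldl_append replicate_Suc replicate_append_same)
      then show ?case using Suc rS r0 unfolding \<delta>_def by (cases "e = 0") auto
    qed
  qed
  define Inv where "Inv = (\<lambda>w (dir::nat, m::nat, d::nat).
      (dir = 0 \<longrightarrow> (\<exists>a. w = replicate a (A,A) \<and> m = r a \<and> d = 0)) \<and>
      (dir = 1 \<longrightarrow> (\<exists>a e. w = replicate a (A,A) @ replicate e (Pad,A) \<and> m = r a \<and> d = r e)) \<and>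
      (dir = 2 \<longrightarrow> (\<exists>a e. w = replicate a (A,A) @ replicate e (A,Pad) \<and> m = r a \<and> d = r e)) \<and>
      dir \<le> 3)"
  have invar: "\<And>w. Inv w (foldl \<delta> (0,0,0) w)"
  proof -
    fix w show "Inv w (foldl \<delta> (0,0,0) w)"
    proof (induct w rule: rev_induct)
      case Nil then show ?case unfolding Inv_def using r0 by simp
    next
      case (snoc c w)
      obtain dir m d where st: "foldl \<delta> (0,0,0) w = (dir, m, d)" by (metis prod_cases3)
      have IH: "Inv w (dir, m, d)" using snoc st by simp
      have eq: "foldl \<delta> (0,0,0) (w @ [c]) = \<delta> (dir, m, d) c" using st by simp
      have "Inv (w @ [c]) (\<delta> (dir, m, d) c)"
      proof -
        consider "c = (A,A)" | "c = (Pad,A)" | "c = (A,Pad)" | "c = (Pad,Pad)"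
          by (metis sym.exhaust surj_pair)
        then show ?thesis
        proof cases
          case 1
          show ?thesis
          proof (cases "dir = 0")
            case True
            then obtain a where a: "w = replicate a (A,A)" "m = r a" "d = 0" using IH unfolding Inv_def by auto
            have "w @ [c] = replicate (Suc a) (A,A)" using a 1 by (simp add: replicate_append_same)
            moreover have "r (Suc m) = r (Suc a)" using a rS by simp
            ultimately show ?thesis using True 1 unfolding Inv_def \<delta>_def
              by (simp del: replicate_Suc)
          next
            case False then show ?thesis using 1 unfolding Inv_def \<delta>_def dead_def by auto
          qed
        next
          case 2
          show ?thesis
          proof (cases "dir = 0")
            case True
            then obtain a where a: "w = replicate a (A,A)" "m = r a" "d = 0" using IH unfolding Inv_def by auto
            have "w @ [c] = replicate a (A,A) @ replicate 1 (Pad,A)" using a 2 by simp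
            moreover have "r (Suc d) = r 1" using a by simp
            ultimately show ?thesis using True 2 a unfolding Inv_def \<delta>_def by fastforce
          next
            case F0: False
            show ?thesis
            proof (cases "dir = 1")
              case True
              then obtain a e where a: "w = replicate a (A,A) @ replicate e (Pad,A)" "m = r a" "d = r e"
                using IH unfolding Inv_def by auto
              have "w @ [c] = replicate a (A,A) @ replicate (Suc e) (Pad,A)" using a 2
                by (simp add: replicate_append_same)
              moreover have "r (Suc d) = r (Suc e)" using a rS by simp
              ultimately show ?thesis using True 2 a unfolding Inv_def \<delta>_def by fastforce
            next
              case False then show ?thesis using F0 2 unfolding Inv_def \<delta>_def dead_def by auto
            qed
          qed
        next
          case 3
          show ?thesis
          proof (cases "dir = 0")
            case True
            then obtain a where a: "w = replicate a (A,A)" "m = r a" "d = 0" using IH unfolding Inv_def by auto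
            have "w @ [c] = replicate a (A,A) @ replicate 1 (A,Pad)" using a 3 by simp
            moreover have "r (Suc d) = r 1" using a by simp
            ultimately show ?thesis using True 3 a unfolding Inv_def \<delta>_def by fastforce
          next
            case F0: False
            show ?thesis
            proof (cases "dir = 2")
              case True
              then obtain a e where a: "w = replicate a (A,A) @ replicate e (A,Pad)" "m = r a" "d = r e"
                using IH unfolding Inv_def by auto
              have "w @ [c] = replicate a (A,A) @ replicate (Suc e) (A,Pad)" using a 3
                by (simp add: replicate_append_same)
              moreover have "r (Suc d) = r (Suc e)" using a rS by simp
              ultimately show ?thesis using True 3 a unfolding Inv_def \<delta>_def by fastforce
            next
              case False then show ?thesis using F0 3 unfolding Inv_def \<delta>_def dead_def by auto
            qed
          qed
        next
          case 4 then show ?thesis unfolding Inv_def \<delta>_def dead_def by auto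
        qed
      qed
      then show ?case using eq by simp
    qed
  qed
  have Srr: "\<And>a e. S (r a) (r a + r e) = S a (a + e)" unfolding r_def using EP_red[OF ep] .
  have Srr': "\<And>a e. S (r a + r e) (r a) = S (a + e) a" unfolding r_def using EP_red[OF ep'] .
  have "{cw a b | a b. S a b} = {w. foldl \<delta> (0,0,0) w \<in> F}"
  proof (intro set_eqI iffI)
    fix w assume "w \<in> {cw a b | a b. S a b}"
    then obtain a b where w: "w = cw a b" "S a b" by blast
    show "w \<in> {w. foldl \<delta> (0,0,0) w \<in> F}"
    proof (cases "a \<le> b")
      case True
      define e where "e = b - a"
      have b: "b = a + e" using True e_def by simp
      have "foldl \<delta> (0,0,0) w = (if e = 0 then (0, r a, 0) else (1, r a, r e))"
        using w b cw_le run0 run1 by simp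
      then show ?thesis using w b Srr[of a e] Srr[of a 0] r0 unfolding F_def by auto
    next
      case False
      define e where "e = a - b"
      have b: "a = b + e" using False e_def by simp
      have "foldl \<delta> (0,0,0) w = (if e = 0 then (0, r b, 0) else (2, r b, r e))"
        using w b cw_ge run0 run2 by simp
      then show ?thesis using w b Srr'[of b e] Srr[of b 0] r0 unfolding F_def by auto
    qed
  next
    fix w assume "w \<in> {w. foldl \<delta> (0,0,0) w \<in> F}"
    then have acc: "foldl \<delta> (0,0,0) w \<in> F" by simp
    obtain dir m d where st: "foldl \<delta> (0,0,0) w = (dir, m, d)" by (metis prod_cases3)
    have I: "Inv w (dir, m, d)" using invar[of w] st by simp
    have Fd: "(dir = 0 \<and> S m m) \<or> (dir = 1 \<and> S m (m + d)) \<or> (dir = 2 \<and> S (m + d) m)"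
      using acc st unfolding F_def by simp
    then consider "dir = 0" "S m m" | "dir = 1" "S m (m + d)" | "dir = 2" "S (m + d) m" by blast
    then show "w \<in> {cw a b | a b. S a b}"
    proof cases
      case 1
      then obtain a where a: "w = replicate a (A,A)" "m = r a" "d = 0" using I unfolding Inv_def by auto
      have "w = cw a (a + 0)" using a cw_le[of a 0] by simp
      moreover have "S a (a + 0)" using 1 a Srr[of a 0] r0 by simp
      ultimately show ?thesis by blast
    next
      case 2
      then obtain a e where a: "w = replicate a (A,A) @ replicate e (Pad,A)" "m = r a" "d = r e"
        using I unfolding Inv_def by auto
      have "w = cw a (a + e)" using a cw_le[of a e] by simp
      moreover have "S a (a + e)" using 2 a Srr[of a e] by simp
      ultimately show ?thesis by blast
    next
      case 3
      then obtain a e where a: "w = replicate a (A,A) @ replicate e (A,Pad)" "m = r a" "d = r e"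
        using I unfolding Inv_def by auto
      have "w = cw (a + e) a" using a cw_ge[of a e] by simp
      moreover have "S (a + e) a" using 3 a Srr'[of a e] by simp
      ultimately show ?thesis by blast
    qed
  qed
  moreover have "(0,0,0) \<in> Qs" unfolding Qs_def using K0 by simp
  moreover have "finite Qs" unfolding Qs_def by simp
  ultimately show ?thesis using regular_of_dfa[OF _ _ cl] by blast
qed

lemma regular_iff_EP: "regular {cw a b | a b. S a b} \<longleftrightarrow> (\<exists>T P. EP S T P)"
  using regular_EP EP_regular by blast

lemma regular_relation_iff:
  "regular_relation R \<longleftrightarrow> (\<exists>T P. EP (\<lambda>a b. R (replicate a ()) (replicate b ())) T P)"
  unfolding regular_relation_def conv_set_cw by (rule regular_iff_EP)


lemma prop_far1: "i + 2 \<le> j \<Longrightarrow> prop_rel \<rho> p (Inr (k,i)) (Inr (l,j)) = \<rho> (p k 1) (p l 3)"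
  by auto
lemma prop_far2: "j + 2 \<le> i \<Longrightarrow> prop_rel \<rho> p (Inr (k,i)) (Inr (l,j)) = \<rho> (p k 3) (p l 1)"
  by auto
lemma prop_shift: "prop_rel \<rho> p (Inr (k, Suc i)) (Inr (l, Suc j)) = prop_rel \<rho> p (Inr (k,i)) (Inr (l,j))"
  by auto
lemma prop_Inl1: "2 \<le> j \<Longrightarrow> prop_rel \<rho> p (Inl q) (Inr (l,j)) = \<rho> q (p l 2)"
  by auto
lemma prop_Inl2: "2 \<le> j \<Longrightarrow> prop_rel \<rho> p (Inr (l,j)) (Inl q) = \<rho> (p l 2) q"
  by auto

lemma iso_from_inv:
  assumes G: "bij_betw G C X" and pres: "\<forall>c\<in>C. \<forall>d\<in>C. \<sigma> c d \<longleftrightarrow> \<rho> (G c) (G d)"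
  shows "rel_isomorphic X \<rho> C \<sigma>"
proof -
  define f where "f = the_inv_into C G"
  have fb: "bij_betw f X C" unfolding f_def using bij_betw_the_inv_into[OF G] .
  have Gf: "\<And>x. x \<in> X \<Longrightarrow> G (f x) = x" unfolding f_def using G f_the_inv_into_f_bij_betw by metis
  have "\<forall>x\<in>X. \<forall>y\<in>X. \<rho> x y \<longleftrightarrow> \<sigma> (f x) (f y)"
  proof (intro ballI)
    fix x y assume "x \<in> X" "y \<in> X"
    then have "f x \<in> C" "f y \<in> C" using fb bij_betw_apply by metis+
    then show "\<rho> x y \<longleftrightarrow> \<sigma> (f x) (f y)" using pres Gf \<open>x \<in> X\<close> \<open>y \<in> X\<close> by metis
  qed
  then show ?thesis unfolding rel_isomorphic_def using fb by blast
qed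

lemma div_gap: assumes "0 < (n::nat)" "x + 2 * n \<le> y" shows "x div n + 2 \<le> y div n"
proof -
  have "(x + 2 * n) div n = x div n + 2" using assms(1) by simp
  moreover have "(x + 2 * n) div n \<le> y div n" using assms(2) by (rule div_le_mono)
  ultimately show ?thesis by simp
qed

lemma dir2:
  assumes fa: "FA_foundational Q \<rho>0 n p"
    and iso: "rel_isomorphic X \<rho> (prop_carrier Q n p) (prop_rel \<rho>0 p)"
  shows "unary_FA_presentable X \<rho>"
proof -
  define C where "C = prop_carrier Q n p"
  obtain f where fb: "bij_betw f X C" and pres: "\<forall>x\<in>X. \<forall>y\<in>X. \<rho> x y \<longleftrightarrow> prop_rel \<rho>0 p (f x) (f y)"
    using iso unfolding rel_isomorphic_def C_def by blast
  define g where "g = the_inv_into X f"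
  have gb: "bij_betw g C X" unfolding g_def using bij_betw_the_inv_into[OF fb] .
  have fg: "\<And>c. c \<in> C \<Longrightarrow> f (g c) = c" unfolding g_def using fb f_the_inv_into_f_bij_betw by metis
  define Q' where "Q' = Q - seed_elems n p"
  have finQ': "finite Q'" using fa unfolding FA_foundational_def Q'_def by simp
  define c where "c = card Q'"
  obtain e where eb: "bij_betw e {0..<c} Q'" using ex_bij_betw_nat_finite[OF finQ'] unfolding c_def by blast
  define enc where "enc = (\<lambda>a. if a < c then Inl (e a) else Inr ((a - c) mod n, (a - c) div n + 1))"
  define Ln where "Ln = {a. a < c \<or> 0 < n}"
  have encb: "bij_betw enc Ln C"
  proof -
    have "inj_on enc Ln"
    proof (rule inj_onI)
      fix a b assume ab: "a \<in> Ln" "b \<in> Ln" "enc a = enc b"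
      show "a = b"
      proof (cases "a < c")
        case True
        then show ?thesis using ab eb unfolding enc_def bij_betw_def inj_on_def
          by (auto split: if_splits)
      next
        case False
        then have "b \<ge> c" using ab unfolding enc_def by (auto split: if_splits)
        then have "(a - c) mod n = (b - c) mod n" "(a - c) div n = (b - c) div n"
          using ab False unfolding enc_def by auto
        then have "a - c = b - c" by (metis div_mult_mod_eq)
        then show ?thesis using False \<open>b \<ge> c\<close> by simp
      qed
    qed
    moreover have "enc ` Ln = C"
    proof (intro set_eqI iffI)
      fix x assume "x \<in> enc ` Ln"
      then obtain a where a: "a \<in> Ln" "x = enc a" by blast
      show "x \<in> C"
      proof (cases "a < c")
        case True
        then have "e a \<in> Q'" using eb bij_betw_apply by fastforce
        then show ?thesis using a True unfolding C_def prop_carrier_def enc_def Q'_def by auto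
      next
        case False
        then have "0 < n" using a unfolding Ln_def by simp
        then show ?thesis using a False unfolding C_def prop_carrier_def enc_def by auto
      qed
    next
      fix x assume "x \<in> C"
      then consider q where "q \<in> Q'" "x = Inl q" | k i where "k < n" "1 \<le> i" "x = Inr (k, i)"
        unfolding C_def prop_carrier_def Q'_def by blast
      then show "x \<in> enc ` Ln"
      proof cases
        case 1
        then obtain a where "a \<in> {0..<c}" "e a = q" using eb by (metis bij_betw_iff_bijections)
        then show ?thesis using 1 unfolding enc_def Ln_def by (auto intro!: image_eqI[of _ _ a])
      next
        case 2
        define a where "a = c + (i - 1) * n + k"
        have "(a - c) mod n = k" "(a - c) div n = i - 1" using 2 unfolding a_def by auto
        then have "enc a = x" using 2 unfolding enc_def a_def by auto
        moreover have "a \<in> Ln" using 2 unfolding Ln_def by simp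
        ultimately show ?thesis by blast
      qed
    qed
    ultimately show ?thesis unfolding bij_betw_def by simp
  qed
  define L :: "unit list set" where "L = {w. length w \<in> Ln}"
  define phi where "phi = (\<lambda>w::unit list. g (enc (length w)))"
  have regL: "regular L"
  proof -
    define \<delta> where "\<delta> = (\<lambda>(q::nat) (u::unit). min (Suc q) c)"
    have run: "\<And>w q. q \<le> c \<Longrightarrow> foldl \<delta> q w = min (q + length w) c"
    proof -
      fix w :: "unit list" show "\<And>q. q \<le> c \<Longrightarrow> foldl \<delta> q w = min (q + length w) c"
        by (induct w) (auto simp: \<delta>_def)
    qed
    have "L = {w. foldl \<delta> 0 w \<in> {q. q < c \<or> 0 < n}}"
      unfolding L_def Ln_def using run[of 0] by auto
    moreover have "\<forall>q\<in>{..c}. \<forall>u. \<delta> q u \<in> {..c}" unfolding \<delta>_def by auto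
    ultimately show ?thesis using regular_of_dfa[of "{..c}" 0 \<delta> L "{q. q < c \<or> 0 < n}"] by blast
  qed
  have imL: "phi ` L = X"
  proof -
    have "length ` L = Ln" unfolding L_def
      by (auto intro!: image_eqI[where x="replicate _ ()"])
    then have "phi ` L = g ` enc ` Ln" unfolding phi_def by (metis image_image)
    also have "\<dots> = X" using encb gb by (simp add: bij_betw_def)
    finally show ?thesis .
  qed
  have ginj: "\<And>a b. a \<in> Ln \<Longrightarrow> b \<in> Ln \<Longrightarrow> g (enc a) = g (enc b) \<longleftrightarrow> a = b"
  proof -
    fix a b assume "a \<in> Ln" "b \<in> Ln"
    moreover have "bij_betw (g \<circ> enc) Ln X" using bij_betw_trans[OF encb gb] .
    ultimately show "g (enc a) = g (enc b) \<longleftrightarrow> a = b" unfolding bij_betw_def inj_on_def by auto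
  qed
  have rel: "\<And>a b. a \<in> Ln \<Longrightarrow> b \<in> Ln \<Longrightarrow> \<rho> (g (enc a)) (g (enc b)) \<longleftrightarrow> prop_rel \<rho>0 p (enc a) (enc b)"
  proof -
    fix a b assume "a \<in> Ln" "b \<in> Ln"
    then have "enc a \<in> C" "enc b \<in> C" using encb bij_betw_apply by metis+
    then show "\<rho> (g (enc a)) (g (enc b)) \<longleftrightarrow> prop_rel \<rho>0 p (enc a) (enc b)"
      using pres fg gb bij_betw_apply by metis
  qed
  define P where "P = max 1 n"
  define T where "T = c + 2 * P + 1"
  have P0: "0 < P" unfolding P_def by simp
  have Ln_iff: "\<And>a. replicate a () \<in> L \<longleftrightarrow> a \<in> Ln" unfolding L_def by simp
  have encR: "\<And>a. c \<le> a \<Longrightarrow> enc a = Inr ((a - c) mod n, (a - c) div n + 1)" unfolding enc_def by simp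
  have encRn: "\<And>a. 0 < n \<Longrightarrow> c \<le> a \<Longrightarrow> enc (a + n) = Inr ((a - c) mod n, Suc ((a - c) div n + 1))"
  proof -
    fix a assume "0 < n" "c \<le> a"
    then have "a + n - c = (a - c) + n" by simp
    then show "enc (a + n) = Inr ((a - c) mod n, Suc ((a - c) div n + 1))"
      using encR[of "a+n"] \<open>0 < n\<close> \<open>c \<le> a\<close> by (simp del: add_diff_assoc2 add: Suc_diff_le div_add_self2)
  qed
  have EPeq: "EP (\<lambda>a b. a \<in> Ln \<and> b \<in> Ln \<and> a = b) T P"
    unfolding EP_def T_def using P0 unfolding Ln_def by auto
  have regE: "regular_relation (\<lambda>u v. u \<in> L \<and> v \<in> L \<and> phi u = phi v)"
  proof -
    have "(\<lambda>a b. replicate a () \<in> L \<and> replicate b () \<in> L \<and> phi (replicate a ()) = phi (replicate b ()))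
        = (\<lambda>a b. a \<in> Ln \<and> b \<in> Ln \<and> a = b)"
      unfolding phi_def Ln_iff using ginj by (auto simp: fun_eq_iff)
    then show ?thesis unfolding regular_relation_iff using EPeq by metis
  qed
  define SR where "SR = (\<lambda>a b. a \<in> Ln \<and> b \<in> Ln \<and> prop_rel \<rho>0 p (enc a) (enc b))"
  have EPR: "EP SR T P"
  proof (cases "n = 0")
    case True
    then have "\<And>a. a \<in> Ln \<longleftrightarrow> a < c" unfolding Ln_def by simp
    then show ?thesis unfolding EP_def SR_def T_def using P0 by auto
  next
    case False
    then have n0: "0 < n" by simp
    then have Pn: "P = n" unfolding P_def by simp
    have LnU: "\<And>a. a \<in> Ln" unfolding Ln_def using n0 by simp
    show ?thesis unfolding EP_def
    proof (intro conjI allI impI)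
      show "0 < P" by (rule P0)
    next
      fix a b assume ab: "T \<le> a" "T \<le> b"
      then have "c \<le> a" "c \<le> b" unfolding T_def by auto
      then show "SR (a + P) (b + P) = SR a b" unfolding SR_def Pn
        using encRn[OF n0] encR LnU prop_shift by simp
    next
      fix a b assume ab: "a + T \<le> b"
      then have cb: "c \<le> b" "c \<le> b + n" unfolding T_def by auto
      show "SR a (b + P) = SR a b"
      proof (cases "a < c")
        case True
        have "(b - c) div n \<ge> 2" using div_gap[OF n0, of 0 "b - c"] ab True unfolding T_def Pn by (simp add: numeral_2_eq_2)
        then show ?thesis unfolding SR_def Pn using LnU encRn[OF n0 cb(1)] encR[OF cb(1)] True
          by (simp add: enc_def prop_Inl1)
      next
        case False
        have "(a - c) div n + 2 \<le> (b - c) div n" using div_gap[OF n0, of "a - c" "b - c"] ab False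
          unfolding T_def Pn by auto
        then show ?thesis unfolding SR_def Pn using LnU encRn[OF n0 cb(1)] encR[OF cb(1)] encR[of a] False
          by (simp add: prop_far1)
      qed
    next
      fix a b assume ab: "b + T \<le> a"
      then have ca: "c \<le> a" unfolding T_def by auto
      show "SR (a + P) b = SR a b"
      proof (cases "b < c")
        case True
        have "(a - c) div n \<ge> 2" using div_gap[OF n0, of 0 "a - c"] ab True unfolding T_def Pn by (simp add: numeral_2_eq_2)
        then show ?thesis unfolding SR_def Pn using LnU encRn[OF n0 ca] encR[OF ca] True
          by (simp add: enc_def prop_Inl2)
      next
        case False
        have "(b - c) div n + 2 \<le> (a - c) div n" using div_gap[OF n0, of "b - c" "a - c"] ab False
          unfolding T_def Pn by auto
        then show ?thesis unfolding SR_def Pn using LnU encRn[OF n0 ca] encR[OF ca] encR[of b] False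
          by (simp add: prop_far2)
      qed
    qed
  qed
  have regR: "regular_relation (\<lambda>u v. u \<in> L \<and> v \<in> L \<and> \<rho> (phi u) (phi v))"
  proof -
    have "(\<lambda>a b. replicate a () \<in> L \<and> replicate b () \<in> L \<and> \<rho> (phi (replicate a ())) (phi (replicate b ())))
        = SR"
      unfolding phi_def Ln_iff SR_def using rel by (auto simp: fun_eq_iff)
    then show ?thesis unfolding regular_relation_iff using EPR by metis
  qed
  show ?thesis unfolding unary_FA_presentable_def using regL imL regE regR by blast
qed


lemma uniform_const: "(\<And>i. i \<in> I \<Longrightarrow> P i = c) \<Longrightarrow> uniform I P"
  unfolding uniform_def by auto

lemma modP: "x < (P::nat) \<Longrightarrow> (x + m * P) mod P = x \<and> (x + m * P) div P = m"
  by auto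

lemma dir1:
  assumes pres: "unary_FA_presentable X \<rho>"
  shows "\<exists>(Q :: nat set) \<rho>0 n p. FA_foundational Q \<rho>0 n p \<and>
        rel_isomorphic X \<rho> (prop_carrier Q n p) (prop_rel \<rho>0 p)"
proof -
  obtain L :: "unit list set" and phi where regL: "regular L" and imL: "phi ` L = X"
    and regE: "regular_relation (\<lambda>u v. u \<in> L \<and> v \<in> L \<and> phi u = phi v)"
    and regR: "regular_relation (\<lambda>u v. u \<in> L \<and> v \<in> L \<and> \<rho> (phi u) (phi v))"
    using pres unfolding unary_FA_presentable_def by blast
  define E where "E = (\<lambda>a b. replicate a () \<in> L \<and> replicate b () \<in> L \<and> phi (replicate a ()) = phi (replicate b ()))"
  define Rn where "Rn = (\<lambda>a b. replicate a () \<in> L \<and> replicate b () \<in> L \<and> \<rho> (phi (replicate a ())) (phi (replicate b ())))"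
  obtain T1 P1 where ep1: "EP E T1 P1" using regE unfolding regular_relation_iff E_def by blast
  obtain T2 P2 where ep2: "EP Rn T2 P2" using regR unfolding regular_relation_iff Rn_def by blast
  define T where "T = Suc (max T1 T2)"
  define P where "P = P1 * P2 * (T + 1)"
  have P10: "0 < P1" using ep1 unfolding EP_def by simp
  have P20: "0 < P2" using ep2 unfolding EP_def by simp
  have epE: "EP E T P"
  proof -
    have "EP E T ((P2 * (T + 1)) * P1)" using EP_mono[OF ep1, of T "P2 * (T+1)"] P20 unfolding T_def by simp
    moreover have "P = (P2 * (T + 1)) * P1" unfolding P_def by (simp add: algebra_simps)
    ultimately show ?thesis by simp
  qed
  have epR: "EP Rn T P"
  proof -
    have "EP Rn T ((P1 * (T + 1)) * P2)" using EP_mono[OF ep2, of T "P1 * (T+1)"] P10 unfolding T_def by simp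
    moreover have "P = (P1 * (T + 1)) * P2" unfolding P_def by (simp add: algebra_simps)
    ultimately show ?thesis by simp
  qed
  have TP: "T < P"
  proof -
    have "1 \<le> P1 * P2" using P10 P20 by (simp add: Suc_le_eq)
    then have "1 * (T + 1) \<le> (P1 * P2) * (T + 1)" by (rule mult_right_mono) simp
    then have "T + 1 \<le> P1 * P2 * (T + 1)" by simp
    then show ?thesis unfolding P_def by simp
  qed
  have P0: "0 < P" using TP by simp
  have E1: "\<And>a b. T \<le> a \<Longrightarrow> T \<le> b \<Longrightarrow> E (a + P) (b + P) = E a b" using epE unfolding EP_def by blast
  have E2: "\<And>a b. a + T \<le> b \<Longrightarrow> E a (b + P) = E a b" using epE unfolding EP_def by blast
  define ph where "ph = (\<lambda>a. phi (replicate a ()))"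
  define Rep where "Rep = (\<lambda>a. E a a \<and> (\<forall>b<a. \<not> E b a))"
  define T' where "T' = 2 * T + P"
  have Rep_per: "\<And>a. T' \<le> a \<Longrightarrow> Rep (a + P) = Rep a"
  proof -
    fix a assume a: "T' \<le> a"
    have M: "E (a + P) (a + P) = E a a" using E1 a unfolding T'_def by simp
    have "(\<exists>b<a. E b a) \<longleftrightarrow> (\<exists>b<a + P. E b (a + P))"
    proof
      assume "\<exists>b<a. E b a"
      then obtain b where b: "b < a" "E b a" by blast
      show "\<exists>b<a + P. E b (a + P)"
      proof (cases "b + T \<le> a")
        case True
        then show ?thesis using E2[OF True] b by (intro exI[of _ b]) simp
      next
        case False
        then have "T \<le> b" using a unfolding T'_def by simp
        moreover have "T \<le> a" using a unfolding T'_def by simp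
        ultimately show ?thesis using E1[of b a] b by (intro exI[of _ "b + P"]) simp
      qed
    next
      assume "\<exists>b<a + P. E b (a + P)"
      then obtain b where b: "b < a + P" "E b (a + P)" by blast
      show "\<exists>b<a. E b a"
      proof (cases "b + T \<le> a")
        case True
        moreover have "0 < T" unfolding T_def by simp
        ultimately show ?thesis using E2[OF True] b by (intro exI[of _ b]) simp
      next
        case False
        then have b': "T \<le> b - P" "b = (b - P) + P" using a unfolding T'_def by simp_all
        moreover have "T \<le> a" using a unfolding T'_def by simp
        ultimately have "E (b - P) a" using E1[of "b - P" a] b by simp
        moreover have "b - P < a" using b a P0 unfolding T'_def by linarith
        ultimately show ?thesis by blast
      qed
    qed
    then show "Rep (a + P) = Rep a" unfolding Rep_def using M by blast
  qed
  have Rep_perk: "\<And>a k. T' \<le> a \<Longrightarrow> Rep (a + k * P) = Rep a"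
  proof -
    fix a k assume a: "T' \<le> a"
    show "Rep (a + k * P) = Rep a"
    proof (induct k)
      case 0 then show ?case by simp
    next
      case (Suc k)
      have "Rep (a + Suc k * P) = Rep ((a + k * P) + P)" by (simp add: ac_simps)
      also have "\<dots> = Rep (a + k * P)" using Rep_per a by simp
      finally show ?case using Suc by simp
    qed
  qed
  have Rep_X: "\<And>a. Rep a \<Longrightarrow> ph a \<in> X"
    unfolding Rep_def E_def ph_def using imL by blast
  have Rep_inj: "\<And>a b. Rep a \<Longrightarrow> Rep b \<Longrightarrow> ph a = ph b \<Longrightarrow> a = b"
  proof -
    fix a b assume ab: "Rep a" "Rep b" "ph a = ph b"
    show "a = b"
    proof (rule ccontr)
      assume "a \<noteq> b"
      then consider "a < b" | "b < a" by linarith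
      then show False
      proof cases
        case 1 then show False using ab unfolding Rep_def E_def ph_def by blast
      next
        case 2 then show False using ab unfolding Rep_def E_def ph_def by metis
      qed
    qed
  qed
  have Rep_ex: "\<And>x. x \<in> X \<Longrightarrow> \<exists>a. Rep a \<and> ph a = x"
  proof -
    fix x assume "x \<in> X"
    then obtain u where u: "u \<in> L" "phi u = x" using imL by blast
    define a where "a = (LEAST a. E a a \<and> ph a = x)"
    have ex: "E (length u) (length u) \<and> ph (length u) = x"
      using u unit_list[of u] unfolding E_def ph_def by metis
    have a: "E a a \<and> ph a = x" unfolding a_def by (rule LeastI[of _ "length u"], rule ex)
    have "\<forall>b<a. \<not> E b a"
    proof (intro allI impI notI)
      fix b assume b: "b < a" "E b a"
      then have "E b b \<and> ph b = x" using a unfolding E_def ph_def by simp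
      then show False using not_less_Least[OF b(1)[unfolded a_def]] by blast
    qed
    then show "\<exists>a. Rep a \<and> ph a = x" using a unfolding Rep_def by blast
  qed
  have ph_bij: "bij_betw ph {a. Rep a} X"
    unfolding bij_betw_def inj_on_def using Rep_X Rep_inj Rep_ex by (auto, metis image_eqI mem_Collect_eq)
  have Rn_iff: "\<And>a b. Rep a \<Longrightarrow> Rep b \<Longrightarrow> Rn a b \<longleftrightarrow> \<rho> (ph a) (ph b)"
    unfolding Rep_def Rn_def E_def ph_def by simp
  have R1: "\<And>a b k. T \<le> a \<Longrightarrow> T \<le> b \<Longrightarrow> Rn (a + k * P) (b + k * P) = Rn a b" using ep1k[OF epR] by blast
  have R2: "\<And>a b k. a + T \<le> b \<Longrightarrow> Rn a (b + k * P) = Rn a b" using ep2k[OF epR] by blast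
  have R3: "\<And>a b k. b + T \<le> a \<Longrightarrow> Rn (a + k * P) b = Rn a b" using ep3k[OF epR] by blast
  define Res where "Res = {a. T' \<le> a \<and> a < T' + P \<and> Rep a}"
  define n where "n = card Res"
  have finRes: "finite Res" unfolding Res_def by simp
  obtain r where rb: "bij_betw r {0..<n} Res" using ex_bij_betw_nat_finite[OF finRes] unfolding n_def by blast
  have rk: "\<And>k. k < n \<Longrightarrow> T' \<le> r k \<and> r k < T' + P \<and> Rep (r k)"
    using rb unfolding bij_betw_def Res_def by auto
  define p where "p = (\<lambda>k i. r k + (i - 1) * P)"
  have p_ge: "\<And>k i. k < n \<Longrightarrow> T' \<le> p k i" unfolding p_def using rk by (simp add: trans_le_add1)
  have p_Rep: "\<And>k i. k < n \<Longrightarrow> Rep (p k i)" unfolding p_def using rk Rep_perk by simp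
  have p_decomp: "\<And>a. T' \<le> a \<Longrightarrow> Rep a \<Longrightarrow> \<exists>k<n. \<exists>i\<ge>1. a = p k i"
  proof -
    fix a assume a: "T' \<le> a" "Rep a"
    define a' where "a' = T' + (a - T') mod P"
    have dec: "a = a' + ((a - T') div P) * P" unfolding a'_def using a by simp
    have "Rep a'" using Rep_perk[of a' "(a - T') div P"] dec a unfolding a'_def by simp
    moreover have "a' < T' + P" unfolding a'_def using P0 by simp
    ultimately have "a' \<in> Res" unfolding Res_def a'_def by simp
    then obtain k where k: "k < n" "r k = a'" using rb by (metis atLeastLessThan_iff bij_betw_iff_bijections)
    have "a = p k ((a - T') div P + 1)" unfolding p_def using dec k by simp
    moreover have "1 \<le> (a - T') div P + 1" by simp
    ultimately show "\<exists>k<n. \<exists>i\<ge>1. a = p k i" using k by blast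
  qed
  have p_uniq: "\<And>k l i j. k < n \<Longrightarrow> l < n \<Longrightarrow> 1 \<le> i \<Longrightarrow> 1 \<le> j \<Longrightarrow> p k i = p l j \<Longrightarrow> k = l \<and> i = j"
  proof -
    fix k l i j assume h: "k < n" "l < n" "1 \<le> i" "1 \<le> j" "p k i = p l j"
    have "p k i - T' = (r k - T') + (i - 1) * P" "p l j - T' = (r l - T') + (j - 1) * P"
      unfolding p_def using rk[OF h(1)] rk[OF h(2)] by simp_all
    moreover have "r k - T' < P" using rk[OF h(1)] by linarith
    moreover have "r l - T' < P" using rk[OF h(2)] by linarith
    moreover have "p k i - T' = p l j - T'" using h(5) by simp
    ultimately have "r k - T' = r l - T'" "i - 1 = j - 1" using modP[of "r k - T'" P "i - 1"] modP[of "r l - T'" P "j - 1"] by auto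
    then have "r k = r l" "i = j" using rk[OF h(1)] rk[OF h(2)] h(3,4) by auto
    moreover have "inj_on r {0..<n}" using rb by (simp add: bij_betw_def)
    ultimately show "k = l \<and> i = j" using h(1,2) unfolding inj_on_def by simp
  qed
  have p_small: "\<And>k i. k < n \<Longrightarrow> 1 \<le> i \<Longrightarrow> p k i < T' + 5 * P \<longleftrightarrow> i \<le> 5"
  proof -
    fix k i :: nat assume h: "k < n" "1 \<le> i"
    show "p k i < T' + 5 * P \<longleftrightarrow> i \<le> 5"
    proof
      assume "p k i < T' + 5 * P"
      moreover have "T' \<le> r k" using rk[OF h(1)] by simp
      ultimately have "(i - 1) * P < 5 * P" unfolding p_def by linarith
      then have "i - 1 < 5" by (simp only: mult_less_cancel2)
      then show "i \<le> 5" by simp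
    next
      assume "i \<le> 5"
      then have "(i - 1) * P \<le> 4 * P" by (intro mult_right_mono) auto
      moreover have "r k < T' + P" using rk[OF h(1)] by simp
      ultimately show "p k i < T' + 5 * P" unfolding p_def by linarith
    qed
  qed
  define Q where "Q = {a. a < T' + 5 * P \<and> Rep a}"
  define \<rho>0 where "\<rho>0 = (\<lambda>a b. a \<in> Q \<and> b \<in> Q \<and> Rn a b)"
  have seeds: "seed_elems n p = {a. T' \<le> a \<and> a < T' + 5 * P \<and> Rep a}"
  proof (intro set_eqI iffI)
    fix a assume "a \<in> seed_elems n p"
    then obtain k i where "k < n" "i \<in> {1..5}" "a = p k i" unfolding seed_elems_def by blast
    then show "a \<in> {a. T' \<le> a \<and> a < T' + 5 * P \<and> Rep a}" using p_ge p_Rep p_small by auto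
  next
    fix a assume "a \<in> {a. T' \<le> a \<and> a < T' + 5 * P \<and> Rep a}"
    then have a: "T' \<le> a" "a < T' + 5 * P" "Rep a" by auto
    then obtain k i where "k < n" "1 \<le> i" "a = p k i" using p_decomp by blast
    then show "a \<in> seed_elems n p" unfolding seed_elems_def using p_small a(2) by auto
  qed
  have Q': "Q - seed_elems n p = {a. a < T' \<and> Rep a}"
    unfolding seeds Q_def using TP unfolding T'_def by auto
  have TT': "T \<le> T'" unfolding T'_def by simp
  have pT: "\<And>k i. k < n \<Longrightarrow> T \<le> p k i" using p_ge TT' le_trans by blast
  have p_add: "\<And>k i t. 1 \<le> i \<Longrightarrow> p k (i + t) = p k i + t * P"
  proof -
    fix k i t :: nat assume "1 \<le> i"
    then have "i + t - 1 = (i - 1) + t" by simp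
    then show "p k (i + t) = p k i + t * P" unfolding p_def by (simp only: add_mult_distrib add.assoc)
  qed
  have pshift: "\<And>k l i j t. k < n \<Longrightarrow> l < n \<Longrightarrow> 1 \<le> i \<Longrightarrow> 1 \<le> j \<Longrightarrow>
      Rn (p k (i + t)) (p l (j + t)) = Rn (p k i) (p l j)"
    using p_add R1 pT by simp
  have far1: "\<And>k l i j. k < n \<Longrightarrow> l < n \<Longrightarrow> 1 \<le> i \<Longrightarrow> i + 2 \<le> j \<Longrightarrow>
      Rn (p k i) (p l j) = Rn (p k 1) (p l 3)"
  proof -
    fix k l i j :: nat assume h: "k < n" "l < n" "1 \<le> i" "i + 2 \<le> j"
    have e: "Rn (p k (1 + (i - 1))) (p l ((j - i + 1) + (i - 1))) = Rn (p k 1) (p l (j - i + 1))"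
      by (rule pshift) (use h in auto)
    have q1: "1 + (i - 1) = i" "(j - i + 1) + (i - 1) = j" using h by auto
    have s1: "Rn (p k i) (p l j) = Rn (p k 1) (p l (j - i + 1))" using e unfolding q1 .
    have q2: "j - i + 1 = 3 + (j - i - 2)" using h by arith
    have s2: "p l (j - i + 1) = p l 3 + (j - i - 2) * P" unfolding q2 by (rule p_add) simp
    have s3: "Rn (p k 1) (p l 3 + (j - i - 2) * P) = Rn (p k 1) (p l 3)"
    proof (rule R2)
      have "p k 1 < T' + P" "T' + 2 * P \<le> p l 3" unfolding p_def using rk h by auto
      then show "p k 1 + T \<le> p l 3" using TP by linarith
    qed
    show "Rn (p k i) (p l j) = Rn (p k 1) (p l 3)" using s1 s2 s3 by simp
  qed
  have far2: "\<And>k l i j. k < n \<Longrightarrow> l < n \<Longrightarrow> 1 \<le> j \<Longrightarrow> j + 2 \<le> i \<Longrightarrow>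
      Rn (p k i) (p l j) = Rn (p k 3) (p l 1)"
  proof -
    fix k l i j :: nat assume h: "k < n" "l < n" "1 \<le> j" "j + 2 \<le> i"
    have e: "Rn (p k ((i - j + 1) + (j - 1))) (p l (1 + (j - 1))) = Rn (p k (i - j + 1)) (p l 1)"
      by (rule pshift) (use h in auto)
    have q1: "1 + (j - 1) = j" "(i - j + 1) + (j - 1) = i" using h by auto
    have s1: "Rn (p k i) (p l j) = Rn (p k (i - j + 1)) (p l 1)" using e unfolding q1 .
    have q2: "i - j + 1 = 3 + (i - j - 2)" using h by arith
    have s2: "p k (i - j + 1) = p k 3 + (i - j - 2) * P" unfolding q2 by (rule p_add) simp
    have s3: "Rn (p k 3 + (i - j - 2) * P) (p l 1) = Rn (p k 3) (p l 1)"
    proof (rule R3)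
      have "p l 1 < T' + P" "T' + 2 * P \<le> p k 3" unfolding p_def using rk h by auto
      then show "p l 1 + T \<le> p k 3" using TP by linarith
    qed
    show "Rn (p k i) (p l j) = Rn (p k 3) (p l 1)" using s1 s2 s3 by simp
  qed
  have eq0: "\<And>k l i. k < n \<Longrightarrow> l < n \<Longrightarrow> 1 \<le> i \<Longrightarrow> Rn (p k i) (p l i) = Rn (p k 1) (p l 1)"
  proof -
    fix k l i :: nat assume h: "k < n" "l < n" "1 \<le> i"
    have e: "Rn (p k (1 + (i - 1))) (p l (1 + (i - 1))) = Rn (p k 1) (p l 1)"
      by (rule pshift) (use h in auto)
    have q: "1 + (i - 1) = i" using h by auto
    show "Rn (p k i) (p l i) = Rn (p k 1) (p l 1)" using e unfolding q .
  qed
  have eqp: "\<And>k l i. k < n \<Longrightarrow> l < n \<Longrightarrow> 1 \<le> i \<Longrightarrow> Rn (p k i) (p l (i + 1)) = Rn (p k 1) (p l 2)"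
  proof -
    fix k l i :: nat assume h: "k < n" "l < n" "1 \<le> i"
    have e: "Rn (p k (1 + (i - 1))) (p l (2 + (i - 1))) = Rn (p k 1) (p l 2)"
      by (rule pshift) (use h in auto)
    have q: "1 + (i - 1) = i" "2 + (i - 1) = i + 1" using h by auto
    show "Rn (p k i) (p l (i + 1)) = Rn (p k 1) (p l 2)" using e unfolding q .
  qed
  have eqm: "\<And>k l i. k < n \<Longrightarrow> l < n \<Longrightarrow> 1 \<le> i \<Longrightarrow> Rn (p k (i + 1)) (p l i) = Rn (p k 2) (p l 1)"
  proof -
    fix k l i :: nat assume h: "k < n" "l < n" "1 \<le> i"
    have e: "Rn (p k (2 + (i - 1))) (p l (1 + (i - 1))) = Rn (p k 2) (p l 1)"
      by (rule pshift) (use h in auto)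
    have q: "1 + (i - 1) = i" "2 + (i - 1) = i + 1" using h by auto
    show "Rn (p k (i + 1)) (p l i) = Rn (p k 2) (p l 1)" using e unfolding q .
  qed
  have inl1: "\<And>q l j. q < T' \<Longrightarrow> l < n \<Longrightarrow> 2 \<le> j \<Longrightarrow> Rn q (p l j) = Rn q (p l 2)"
  proof -
    fix q l j :: nat assume h: "q < T'" "l < n" "2 \<le> j"
    have qq: "2 + (j - 2) = j" using h by simp
    have "p l j = p l 2 + (j - 2) * P" using p_add[of 2 l "j - 2"] unfolding qq by simp
    moreover have "q + T \<le> p l 2" unfolding p_def using rk[OF h(2)] h(1) TP by simp
    ultimately show "Rn q (p l j) = Rn q (p l 2)" using R2 by simp
  qed
  have inl2: "\<And>q l j. q < T' \<Longrightarrow> l < n \<Longrightarrow> 2 \<le> j \<Longrightarrow> Rn (p l j) q = Rn (p l 2) q"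
  proof -
    fix q l j :: nat assume h: "q < T'" "l < n" "2 \<le> j"
    have qq: "2 + (j - 2) = j" using h by simp
    have "p l j = p l 2 + (j - 2) * P" using p_add[of 2 l "j - 2"] unfolding qq by simp
    moreover have "q + T \<le> p l 2" unfolding p_def using rk[OF h(2)] h(1) TP by simp
    ultimately show "Rn (p l j) q = Rn (p l 2) q" using R3 by simp
  qed
  have pQ: "\<And>k i. k < n \<Longrightarrow> 1 \<le> i \<Longrightarrow> i \<le> 5 \<Longrightarrow> p k i \<in> Q"
    unfolding Q_def using p_small p_Rep by simp
  have r0: "\<And>k i l j. k < n \<Longrightarrow> l < n \<Longrightarrow> i \<in> {1..5} \<Longrightarrow> j \<in> {1..5} \<Longrightarrow> \<rho>0 (p k i) (p l j) = Rn (p k i) (p l j)"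
    unfolding \<rho>0_def using pQ by simp
  have FA: "FA_foundational Q \<rho>0 n p"
    unfolding FA_foundational_def
  proof (intro conjI allI impI ballI)
    show "finite Q" unfolding Q_def by simp
  next
    fix x y assume "\<rho>0 x y" then show "x \<in> Q" "y \<in> Q" unfolding \<rho>0_def by simp_all
  next
    show "seed_elems n p \<subseteq> Q" unfolding seeds Q_def by auto
  next
    show "inj_on (\<lambda>(k, i). p k i) ({..<n} \<times> {1..5})"
    proof (rule inj_onI)
      fix x y assume "x \<in> {..<n} \<times> {1..5}" "y \<in> {..<n} \<times> {1..5}" "(\<lambda>(k, i). p k i) x = (\<lambda>(k, i). p k i) y"
      then show "x = y" using p_uniq by (cases x, cases y) auto
    qed
  next
    fix k l assume kl: "k < n" "l < n"
    show "uniform {1..5} (\<lambda>i. \<rho>0 (p k i) (p l i))"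
    proof (rule uniform_const)
      fix i :: nat assume i: "i \<in> {1..5}"
      show "\<rho>0 (p k i) (p l i) = Rn (p k 1) (p l 1)" using r0[OF kl i i] eq0[OF kl, of i] i by simp
    qed
    show "uniform {1..4} (\<lambda>i. \<rho>0 (p k i) (p l (i + 1)))"
    proof (rule uniform_const)
      fix i :: nat assume i: "i \<in> {1..4}"
      then have i': "i \<in> {1..5}" "i + 1 \<in> {1..5}" by auto
      show "\<rho>0 (p k i) (p l (i + 1)) = Rn (p k 1) (p l 2)" using r0[OF kl i'] eqp[OF kl, of i] i by simp
    qed
    show "uniform {1..4} (\<lambda>i. \<rho>0 (p k (i + 1)) (p l i))"
    proof (rule uniform_const)
      fix i :: nat assume i: "i \<in> {1..4}"
      then have i': "i + 1 \<in> {1..5}" "i \<in> {1..5}" by auto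
      show "\<rho>0 (p k (i + 1)) (p l i) = Rn (p k 2) (p l 1)" using r0[OF kl i'] eqm[OF kl, of i] i by simp
    qed
    show "uniform {(i, j). 1 \<le> i \<and> j \<le> 5 \<and> i + 2 \<le> j} (\<lambda>(i, j). \<rho>0 (p k i) (p l j))"
    proof (rule uniform_const)
      fix x :: "nat \<times> nat" assume "x \<in> {(i, j). 1 \<le> i \<and> j \<le> 5 \<and> i + 2 \<le> j}"
      then obtain i j where x: "x = (i, j)" "1 \<le> i" "j \<le> 5" "i + 2 \<le> j" by blast
      then have ij: "i \<in> {1..5}" "j \<in> {1..5}" by auto
      show "(\<lambda>(i, j). \<rho>0 (p k i) (p l j)) x = Rn (p k 1) (p l 3)"
        using r0[OF kl ij] far1[OF kl x(2) x(4)] x(1) by simp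
    qed
    show "uniform {(i, j). 1 \<le> i \<and> j \<le> 5 \<and> i + 2 \<le> j} (\<lambda>(i, j). \<rho>0 (p k j) (p l i))"
    proof (rule uniform_const)
      fix x :: "nat \<times> nat" assume "x \<in> {(i, j). 1 \<le> i \<and> j \<le> 5 \<and> i + 2 \<le> j}"
      then obtain i j where x: "x = (i, j)" "1 \<le> i" "j \<le> 5" "i + 2 \<le> j" by blast
      then have ij: "j \<in> {1..5}" "i \<in> {1..5}" by auto
      show "(\<lambda>(i, j). \<rho>0 (p k j) (p l i)) x = Rn (p k 3) (p l 1)"
        using r0[OF kl ij] far2[OF kl x(2) x(4)] x(1) by simp
    qed
  next
    fix k q assume k: "k < n" and q: "q \<in> Q - seed_elems n p"
    then have q': "q < T'" "q \<in> Q" using Q' unfolding Q_def by auto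
    show "uniform {2..5} (\<lambda>i. \<rho>0 q (p k i))"
    proof (rule uniform_const)
      fix i :: nat assume i: "i \<in> {2..5}"
      then have "p k i \<in> Q" using pQ[OF k] by simp
      then show "\<rho>0 q (p k i) = Rn q (p k 2)" using inl1[OF q'(1) k, of i] i q' unfolding \<rho>0_def by simp
    qed
    show "uniform {2..5} (\<lambda>i. \<rho>0 (p k i) q)"
    proof (rule uniform_const)
      fix i :: nat assume i: "i \<in> {2..5}"
      then have "p k i \<in> Q" using pQ[OF k] by simp
      then show "\<rho>0 (p k i) q = Rn (p k 2) q" using inl2[OF q'(1) k, of i] i q' unfolding \<rho>0_def by simp
    qed
  qed
  define C where "C = prop_carrier Q n p"
  define gg where "gg = (\<lambda>c. case c of Inl a \<Rightarrow> a | Inr (k, i) \<Rightarrow> p k i)"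
  have Cdef: "\<And>c. c \<in> C \<longleftrightarrow> (\<exists>a. c = Inl a \<and> a < T' \<and> Rep a) \<or> (\<exists>k i. c = Inr (k, i) \<and> k < n \<and> 1 \<le> i)"
    unfolding C_def prop_carrier_def Q' by auto
  have ggb: "bij_betw gg C {a. Rep a}"
    unfolding bij_betw_def
  proof
    show "inj_on gg C"
    proof (rule inj_onI)
      fix c d assume c: "c \<in> C" and d: "d \<in> C" and e: "gg c = gg d"
      from c consider a where "c = Inl a" "a < T'" "Rep a" | k i where "c = Inr (k, i)" "k < n" "1 \<le> i"
        using Cdef by blast
      then show "c = d"
      proof cases
        case 1
        from d consider b where "d = Inl b" "b < T'" "Rep b" | l j where "d = Inr (l, j)" "l < n" "1 \<le> j"
          using Cdef by blast
        then show ?thesis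
        proof cases
          case d1: 1
          then show ?thesis using 1 d1 e unfolding gg_def by simp
        next
          case 2
          then show ?thesis using 1 2 e p_ge[of l j] unfolding gg_def by simp
        qed
      next
        case 2
        from d consider b where "d = Inl b" "b < T'" "Rep b" | l j where "d = Inr (l, j)" "l < n" "1 \<le> j"
          using Cdef by blast
        then show ?thesis
        proof cases
          case 1
          then show ?thesis using 1 2 e p_ge[of k i] unfolding gg_def by simp
        next
          case d2: 2
          then show ?thesis using 2 d2 e p_uniq[of k l i j] unfolding gg_def by simp
        qed
      qed
    qed
  next
    show "gg ` C = {a. Rep a}"
    proof (intro set_eqI iffI)
      fix a assume "a \<in> gg ` C"
      then obtain c where c: "c \<in> C" "a = gg c" by blast
      then show "a \<in> {a. Rep a}" using Cdef[of c] p_Rep unfolding gg_def by auto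
    next
      fix a assume "a \<in> {a. Rep a}"
      then have a: "Rep a" by simp
      show "a \<in> gg ` C"
      proof (cases "a < T'")
        case True
        then have "Inl a \<in> C" using Cdef a by simp
        then show ?thesis unfolding gg_def by (intro image_eqI[of _ _ "Inl a"]) simp_all
      next
        case False
        then obtain k i where "k < n" "1 \<le> i" "a = p k i" using p_decomp a by (meson not_less)
        then have "Inr (k, i) \<in> C" "a = gg (Inr (k, i))" using Cdef unfolding gg_def by auto
        then show ?thesis by blast
      qed
    qed
  qed
  have inQ: "\<And>a. a < T' \<Longrightarrow> Rep a \<Longrightarrow> a \<in> Q" unfolding Q_def by simp
  have rel: "\<And>c d. c \<in> C \<Longrightarrow> d \<in> C \<Longrightarrow> prop_rel \<rho>0 p c d \<longleftrightarrow> Rn (gg c) (gg d)"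
  proof -
    fix c d assume c: "c \<in> C" and d: "d \<in> C"
    from c consider a where "c = Inl a" "a < T'" "Rep a" | k i where "c = Inr (k, i)" "k < n" "1 \<le> i"
      using Cdef by blast
    then show "prop_rel \<rho>0 p c d \<longleftrightarrow> Rn (gg c) (gg d)"
    proof cases
      case 1
      from d consider b where "d = Inl b" "b < T'" "Rep b" | l j where "d = Inr (l, j)" "l < n" "1 \<le> j"
        using Cdef by blast
      then show ?thesis
      proof cases
        case d1: 1
        then show ?thesis using 1 d1 inQ unfolding gg_def \<rho>0_def by simp
      next
        case 2
        show ?thesis
        proof (cases "j = 1")
          case True
          then show ?thesis using 1 2 inQ pQ[of l 1] unfolding gg_def \<rho>0_def by simp
        next
          case False
          then have "2 \<le> j" using 2 by simp
          then show ?thesis using 1 2 inQ pQ[of l 2] inl1[of a l j] False unfolding gg_def \<rho>0_def by simp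
        qed
      qed
    next
      case 2
      from d consider b where "d = Inl b" "b < T'" "Rep b" | l j where "d = Inr (l, j)" "l < n" "1 \<le> j"
        using Cdef by blast
      then show ?thesis
      proof cases
        case 1
        show ?thesis
        proof (cases "i = 1")
          case True
          then show ?thesis using 1 2 inQ pQ[of k 1] unfolding gg_def \<rho>0_def by simp
        next
          case False
          then have "2 \<le> i" using 2 by simp
          then show ?thesis using 1 2 inQ pQ[of k 2] inl2[of b k i] False unfolding gg_def \<rho>0_def by simp
        qed
      next
        case d2: 2
        have kl: "k < n" "l < n" using 2 d2 by simp_all
        have gc: "gg c = p k i" "gg d = p l j" using 2 d2 unfolding gg_def by simp_all
        have r0': "\<And>i j. i \<in> {1..5} \<Longrightarrow> j \<in> {1..5} \<Longrightarrow> \<rho>0 (p k i) (p l j) = Rn (p k i) (p l j)"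
          using r0[OF kl] by blast
        consider "j = i" | "j = i + 1" | "i = j + 1" | "i + 2 \<le> j" | "j + 2 \<le> i" by linarith
        then show ?thesis
        proof cases
          case 1
          then show ?thesis using 1 2 d2 gc r0'[of 1 1] eq0[OF kl, of i] by simp
        next
          case e2: 2
          then show ?thesis using e2 2 d2 gc r0'[of 1 2] eqp[OF kl, of i] by simp
        next
          case e3: 3
          then show ?thesis using 2 d2 gc r0'[of 2 1] eqm[OF kl, of j] by simp
        next
          case e4: 4
          then show ?thesis using 2 d2 gc r0'[of 1 3] far1[OF kl, of i j] by simp
        next
          case e5: 5
          then show ?thesis using 2 d2 gc r0'[of 3 1] far2[OF kl, of j i] by simp
        qed
      qed
    qed
  qed
  have pres': "\<forall>c\<in>C. \<forall>d\<in>C. prop_rel \<rho>0 p c d \<longleftrightarrow> \<rho> ((ph \<circ> gg) c) ((ph \<circ> gg) d)"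
  proof (intro ballI)
    fix c d assume "c \<in> C" "d \<in> C"
    moreover then have "Rep (gg c)" "Rep (gg d)" using ggb bij_betw_apply by fastforce+
    ultimately show "prop_rel \<rho>0 p c d \<longleftrightarrow> \<rho> ((ph \<circ> gg) c) ((ph \<circ> gg) d)"
      using rel Rn_iff by simp
  qed
  have "rel_isomorphic X \<rho> C (prop_rel \<rho>0 p)"
    by (rule iso_from_inv[OF bij_betw_trans[OF ggb ph_bij] pres'])
  then show ?thesis using FA unfolding C_def by blast
qed

theorem theorem5p1:
  fixes X :: "'a set" and rho :: "'a \<Rightarrow> 'a \<Rightarrow> bool"
  assumes "\<forall>x y. rho x y \<longrightarrow> x \<in> X \<and> y \<in> X"
  shows "unary_FA_presentable X rho \<longleftrightarrow>
    (\<exists>(Q :: nat set) rho0 n p. FA_foundational Q rho0 n p \<and>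
        rel_isomorphic X rho (prop_carrier Q n p) (prop_rel rho0 p))"
  using dir1[of X rho] dir2[of _ _ _ _ X rho] by blast

end
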